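(* Let $F$ satisfy (G1)–(G3), let $\mu$ be an ergodic stationary probability measure of $\Pi(F)$, and let $k,k'\in\{1,\dots,N\}$. Then for every $\varepsilon>0$ there exist admissible compositions $G_A,G_B:I_k\to I_{k'}$ with $G_A(I_{\mu,k})\subset U_\varepsilon(A_{\mu,k'})$ and $G_B(I_{\mu,k})\subset U_\varepsilon(B_{\mu,k'})$.
   Context: Setting: $N\ge1$; $\{0,1\}$-matrix $A=(a_{ij})$ with some power having all entries positive; stochastic matrix $\Pi=(\pi_{ij})$ with $\pi_{ij}>0$ iff $a_{ij}=1$. $I=[0,1]$; $f_1,\dots,f_N:I\to I$ strictly increasing $C^1$ diffeomorphisms onto their images with $f_k(I)\subset(0,1)$. $\mathcal I=\{1,\dots,N\}\times I$, $I_k=\{k\}\times I$. $(k,m)$ admissible iff $\pi_{km}>0$. $\Pi(F)$: Markov process jumping from $(i,x)$ to $(j,f_i(x))$ with probability $\pi_{ij}$. $\mu$ stationary iff $\mu_j=\sum_i\pi_{ij}(f_i)_*\mu_i$ ($\mu_k=\mu|_{I_k}$); ergodic = extreme point. $A_{\mu,k}=\min\operatorname{supp}\mu_k$, $B_{\mu,k}=\max\operatorname{supp}\mu_k$, $I_{\mu,k}=[A_{\mu,k},B_{\mu,k}]$. $U_\varepsilon$ denotes the $\varepsilon$-neighborhood. Admissible composition $f_{w_1\dots w_n}=f_{w_n}\circ\dots\circ f_{w_1}:I_{w_1}\to I_{w_{n+1}}$ with each $(w_i,w_{i+1})$, $i\le n$, admissible; simple transition: $w_1,\dots,w_{n+1}$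 distinct; simple return: $w_1,\dots,w_n$ distinct, $w_{n+1}=w_1$. (G1) every fixed point $q$ of a simple return $g$ has $g'(q)\ne1$; (G2) no simple transition maps an attracting (resp. repelling) fixed point of a simple return to a repelling (resp. attracting) fixed point of a simple return; (G3) no $a_1,\dots,a_N\in I$ with $f_i(a_i)=a_j$ for all admissible $(i,j)$. *)

theory Defs
  imports "HOL-Analysis.Analysis"
begin

text \<open>Vertices are 1..N. Matrices are functions nat => nat => _ (only entries in 1..N matter).\<close>

fun matpow :: "nat \<Rightarrow> (nat \<Rightarrow> nat \<Rightarrow> real) \<Rightarrow> nat \<Rightarrow> nat \<Rightarrow> nat \<Rightarrow> real" where
  "matpow N A 0 i j = (if i = j then 1 else 0)"
| "matpow N A (Suc n) i j = (\<Sum>l\<in>{1..N}. matpow N A n i l * A l j)"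

definition zero_one_matrix :: "nat \<Rightarrow> (nat \<Rightarrow> nat \<Rightarrow> real) \<Rightarrow> bool" where
  "zero_one_matrix N A \<longleftrightarrow> (\<forall>i\<in>{1..N}. \<forall>j\<in>{1..N}. A i j = 0 \<or> A i j = 1)"

definition primitive_matrix :: "nat \<Rightarrow> (nat \<Rightarrow> nat \<Rightarrow> real) \<Rightarrow> bool" where
  "primitive_matrix N A \<longleftrightarrow> (\<exists>n\<ge>1. \<forall>i\<in>{1..N}. \<forall>j\<in>{1..N}. matpow N A n i j > 0)"

definition stochastic_matrix :: "nat \<Rightarrow> (nat \<Rightarrow> nat \<Rightarrow> real) \<Rightarrow> bool" where
  "stochastic_matrix N P \<longleftrightarrow>
     (\<forall>i\<in>{1..N}. (\<forall>j\<in>{1..N}. P i j \<ge> 0) \<and> (\<Sum>j\<in>{1..N}. P i j) = 1)"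

definition good_map :: "(real \<Rightarrow> real) \<Rightarrow> bool" where
  "good_map g \<longleftrightarrow> strict_mono_on {0..1} g \<and> g ` {0..1} \<subseteq> {0<..<1} \<and>
     (\<exists>g'. (\<forall>x\<in>{0..1}. (g has_real_derivative g' x) (at x within {0..1}))
          \<and> continuous_on {0..1} g' \<and> (\<forall>x\<in>{0..1}. g' x \<noteq> 0))"

text \<open>Composition along a word ws = [w_1,...,w_(n+1)]: f_(w_n) o ... o f_(w_1).\<close>
definition word_comp :: "(nat \<Rightarrow> real \<Rightarrow> real) \<Rightarrow> nat list \<Rightarrow> real \<Rightarrow> real" where
  "word_comp f ws = foldl (\<lambda>g i. f i \<circ> g) id (butlast ws)"

definition adm_word :: "nat \<Rightarrow> (nat \<Rightarrow> nat \<Rightarrow> real) \<Rightarrow> nat list \<Rightarrow> nat \<Rightarrow> nat \<Rightarrow> bool" where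
  "adm_word N P ws i j \<longleftrightarrow> length ws \<ge> 2 \<and> set ws \<subseteq> {1..N} \<and> hd ws = i \<and> last ws = j \<and>
     (\<forall>m. Suc m < length ws \<longrightarrow> P (ws ! m) (ws ! Suc m) > 0)"

definition adm_comp :: "nat \<Rightarrow> (nat \<Rightarrow> nat \<Rightarrow> real) \<Rightarrow> (nat \<Rightarrow> real \<Rightarrow> real) \<Rightarrow> nat \<Rightarrow> nat \<Rightarrow> (real \<Rightarrow> real) \<Rightarrow> bool" where
  "adm_comp N P f i j G \<longleftrightarrow> (\<exists>ws. adm_word N P ws i j \<and> G = word_comp f ws)"

definition simple_transition :: "nat \<Rightarrow> (nat \<Rightarrow> nat \<Rightarrow> real) \<Rightarrow> (nat \<Rightarrow> real \<Rightarrow> real) \<Rightarrow> nat \<Rightarrow> nat \<Rightarrow> (real \<Rightarrow> real) \<Rightarrow> bool" where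
  "simple_transition N P f i j G \<longleftrightarrow>
     (\<exists>ws. adm_word N P ws i j \<and> distinct ws \<and> G = word_comp f ws)"

definition simple_return :: "nat \<Rightarrow> (nat \<Rightarrow> nat \<Rightarrow> real) \<Rightarrow> (nat \<Rightarrow> real \<Rightarrow> real) \<Rightarrow> nat \<Rightarrow> (real \<Rightarrow> real) \<Rightarrow> bool" where
  "simple_return N P f i G \<longleftrightarrow>
     (\<exists>ws. adm_word N P ws i i \<and> distinct (butlast ws) \<and> G = word_comp f ws)"

definition G1 :: "nat \<Rightarrow> (nat \<Rightarrow> nat \<Rightarrow> real) \<Rightarrow> (nat \<Rightarrow> real \<Rightarrow> real) \<Rightarrow> bool" where
  "G1 N P f \<longleftrightarrow> (\<forall>i g q d. simple_return N P f i g \<and> q \<in> {0..1} \<and> g q = q \<and>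
      (g has_real_derivative d) (at q within {0..1}) \<longrightarrow> d \<noteq> 1)"

text \<open>attracting: derivative < 1; repelling: derivative > 1 (derivatives are positive)\<close>
definition attracting_fp :: "nat \<Rightarrow> (nat \<Rightarrow> nat \<Rightarrow> real) \<Rightarrow> (nat \<Rightarrow> real \<Rightarrow> real) \<Rightarrow> nat \<Rightarrow> real \<Rightarrow> bool" where
  "attracting_fp N P f i q \<longleftrightarrow> (\<exists>g d. simple_return N P f i g \<and> q \<in> {0..1} \<and> g q = q \<and>
      (g has_real_derivative d) (at q within {0..1}) \<and> \<bar>d\<bar> < 1)"

definition repelling_fp :: "nat \<Rightarrow> (nat \<Rightarrow> nat \<Rightarrow> real) \<Rightarrow> (nat \<Rightarrow> real \<Rightarrow> real) \<Rightarrow> nat \<Rightarrow> real \<Rightarrow> bool" where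
  "repelling_fp N P f i q \<longleftrightarrow> (\<exists>g d. simple_return N P f i g \<and> q \<in> {0..1} \<and> g q = q \<and>
      (g has_real_derivative d) (at q within {0..1}) \<and> \<bar>d\<bar> > 1)"

definition G2 :: "nat \<Rightarrow> (nat \<Rightarrow> nat \<Rightarrow> real) \<Rightarrow> (nat \<Rightarrow> real \<Rightarrow> real) \<Rightarrow> bool" where
  "G2 N P f \<longleftrightarrow> (\<forall>i j h q. simple_transition N P f i j h \<longrightarrow>
      \<not> (attracting_fp N P f i q \<and> repelling_fp N P f j (h q)) \<and>
      \<not> (repelling_fp N P f i q \<and> attracting_fp N P f j (h q)))"

definition G3 :: "nat \<Rightarrow> (nat \<Rightarrow> nat \<Rightarrow> real) \<Rightarrow> (nat \<Rightarrow> real \<Rightarrow> real) \<Rightarrow> bool" where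
  "G3 N P f \<longleftrightarrow> \<not> (\<exists>a. (\<forall>i\<in>{1..N}. a i \<in> {0..1}) \<and>
      (\<forall>i\<in>{1..N}. \<forall>j\<in>{1..N}. P i j > 0 \<longrightarrow> f i (a i) = a j))"

text \<open>A measure on {1..N} x I is represented by the family of its restrictions mu_k to I_k,
  each a Borel measure on the reals concentrated on [0,1].\<close>
definition prob_family :: "nat \<Rightarrow> (nat \<Rightarrow> real measure) \<Rightarrow> bool" where
  "prob_family N \<mu> \<longleftrightarrow> (\<forall>k\<in>{1..N}. sets (\<mu> k) = sets borel \<and> emeasure (\<mu> k) (- {0..1}) = 0)
     \<and> (\<Sum>k\<in>{1..N}. emeasure (\<mu> k) UNIV) = 1"

definition stationary :: "nat \<Rightarrow> (nat \<Rightarrow> nat \<Rightarrow> real) \<Rightarrow> (nat \<Rightarrow> real \<Rightarrow> real) \<Rightarrow> (nat \<Rightarrow> real measure) \<Rightarrow> bool" where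
  "stationary N P f \<mu> \<longleftrightarrow> prob_family N \<mu> \<and>
     (\<forall>j\<in>{1..N}. \<forall>A\<in>sets borel.
        emeasure (\<mu> j) A = (\<Sum>i\<in>{1..N}. ennreal (P i j) * emeasure (\<mu> i) (f i -` A \<inter> {0..1})))"

text \<open>ergodic = extreme point of the convex set of stationary probability measures\<close>
definition ergodic :: "nat \<Rightarrow> (nat \<Rightarrow> nat \<Rightarrow> real) \<Rightarrow> (nat \<Rightarrow> real \<Rightarrow> real) \<Rightarrow> (nat \<Rightarrow> real measure) \<Rightarrow> bool" where
  "ergodic N P f \<mu> \<longleftrightarrow> stationary N P f \<mu> \<and>
     (\<forall>\<nu>1 \<nu>2 (t::real). stationary N P f \<nu>1 \<and> stationary N P f \<nu>2 \<and> 0 < t \<and> t < 1 \<and>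
        (\<forall>k\<in>{1..N}. \<forall>A\<in>sets borel. emeasure (\<mu> k) A =
            ennreal t * emeasure (\<nu>1 k) A + ennreal (1 - t) * emeasure (\<nu>2 k) A)
      \<longrightarrow> (\<forall>k\<in>{1..N}. \<forall>A\<in>sets borel. emeasure (\<nu>1 k) A = emeasure (\<mu> k) A))"

definition msupp :: "real measure \<Rightarrow> real set" where
  "msupp M = {x. \<forall>e>0. emeasure M (ball x e) \<noteq> 0}"

definition A_mu :: "(nat \<Rightarrow> real measure) \<Rightarrow> nat \<Rightarrow> real" where
  "A_mu \<mu> k = Inf (msupp (\<mu> k))"

definition B_mu :: "(nat \<Rightarrow> real measure) \<Rightarrow> nat \<Rightarrow> real" where
  "B_mu \<mu> k = Sup (msupp (\<mu> k))"

end

theory Submission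
  imports Defs
begin


lemma good_cont: "good_map g \<Longrightarrow> continuous_on {0..1} g"
  unfolding good_map_def by (metis DERIV_continuous_on)

lemma good_mono: "good_map g \<Longrightarrow> x \<in> {0..1} \<Longrightarrow> y \<in> {0..1} \<Longrightarrow> x \<le> y \<Longrightarrow> g x \<le> g y"
  unfolding good_map_def strict_mono_on_def by (metis order_le_less)

lemma good_range: "good_map g \<Longrightarrow> x \<in> {0..1} \<Longrightarrow> g x \<in> {0..1}"
  unfolding good_map_def by fastforce

lemma word_comp_snoc: "ws \<noteq> [] \<Longrightarrow> word_comp f (ws @ [j]) = f (last ws) \<circ> word_comp f ws"
proof -
  assume ne: "ws \<noteq> []"
  have "foldl (\<lambda>g i. f i \<circ> g) id ws = foldl (\<lambda>g i. f i \<circ> g) id (butlast ws @ [last ws])"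
    using ne by simp
  also have "\<dots> = f (last ws) \<circ> foldl (\<lambda>g i. f i \<circ> g) id (butlast ws)"
    by (simp only: foldl_append foldl_Cons foldl_Nil)
  finally show ?thesis unfolding word_comp_def by simp
qed

lemma word_comp_single: "word_comp f [i] = id"
  unfolding word_comp_def by simp

lemma adm_word_induct:
  assumes "adm_word N P ws i j"
    and base: "\<And>b. b \<in> {1..N} \<Longrightarrow> P i b > 0 \<Longrightarrow> Q b (f i)"
    and step: "\<And>l b G. Q l G \<Longrightarrow> l \<in> {1..N} \<Longrightarrow> b \<in> {1..N} \<Longrightarrow> P l b > 0 \<Longrightarrow> Q b (f l \<circ> G)"
  shows "Q j (word_comp f ws)"
  using assms(1)
proof (induction ws arbitrary: j rule: rev_induct)
  case Nil
  then show ?case by (simp add: adm_word_def)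
next
  case (snoc x ws)
  have ne: "ws \<noteq> []" using snoc.prems by (auto simp: adm_word_def)
  have xj: "x = j" using snoc.prems by (simp add: adm_word_def)
  have xN: "x \<in> {1..N}" using snoc.prems by (auto simp: adm_word_def)
  have lN: "last ws \<in> {1..N}"
  proof -
    have "set ws \<subseteq> {1..N}" using snoc.prems by (auto simp: adm_word_def)
    then show ?thesis using last_in_set[OF ne] by blast
  qed
  have Pl: "P (last ws) x > 0"
  proof -
    have "Suc (length ws - 1) < length (ws @ [x])" using ne by simp
    then have "P ((ws@[x]) ! (length ws - 1)) ((ws@[x]) ! Suc (length ws - 1)) > 0"
      using snoc.prems by (auto simp: adm_word_def)
    moreover have "(ws@[x]) ! (length ws - 1) = last ws" using ne
      by (simp add: last_conv_nth nth_append)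
    moreover have "(ws@[x]) ! Suc (length ws - 1) = x" using ne by (simp add: nth_append)
    ultimately show ?thesis by simp
  qed
  show ?case
  proof (cases "length ws = 1")
    case True
    then obtain a where ws: "ws = [a]" by (metis One_nat_def length_0_conv length_Suc_conv)
    have "a = i" using snoc.prems ws by (simp add: adm_word_def)
    have "word_comp f [i, j] = f i" by (simp add: word_comp_def)
    then show ?thesis using ws xj base xN Pl \<open>a = i\<close> by simp
  next
    case False
    then have "length ws \<ge> 2" proof -
      have "length ws \<noteq> 0" using ne by simp
      then show ?thesis using False by linarith
    qed
    then have "adm_word N P ws i (last ws)" using snoc.prems ne
      apply (auto simp: adm_word_def)
      apply (metis Suc_lessD length_append_singleton nth_append)
      done
    then have "Q (last ws) (word_comp f ws)" using snoc.IH by blast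
    then have "Q x (f (last ws) \<circ> word_comp f ws)" using step lN xN Pl by blast
    then show ?thesis using xj word_comp_snoc[OF ne, of f x] by metis
  qed
qed

lemma adm_comp_snoc:
  assumes "adm_comp N P f k i G" "P i j > 0" "j \<in> {1..N}"
  shows "adm_comp N P f k j (f i \<circ> G)"
proof -
  obtain ws where ws: "adm_word N P ws k i" "G = word_comp f ws"
    using assms(1) adm_comp_def by blast
  have ne: "ws \<noteq> []" using ws by (auto simp: adm_word_def)
  have "adm_word N P (ws @ [j]) k j"
    unfolding adm_word_def
  proof (intro conjI allI impI)
    fix m assume m: "Suc m < length (ws @ [j])"
    show "P ((ws @ [j]) ! m) ((ws @ [j]) ! Suc m) > 0"
    proof (cases "Suc m < length ws")
      case True then show ?thesis using ws by (simp add: adm_word_def nth_append)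
    next
      case False
      then have "m = length ws - 1" using m by simp
      then show ?thesis using ne ws assms(2)
        by (simp add: adm_word_def nth_append last_conv_nth)
    qed
  qed (use ws ne assms(3) in \<open>auto simp: adm_word_def\<close>)
  then show ?thesis using ws ne unfolding adm_comp_def
    by (metis adm_word_def word_comp_snoc)
qed



lemma matpow_nonneg:
  assumes "zero_one_matrix N A" "j \<in> {1..N}"
  shows "matpow N A n i j \<ge> 0"
  using assms(2)
proof (induction n arbitrary: j)
  case 0 then show ?case by simp
next
  case (Suc n)
  have "\<forall>l\<in>{1..N}. matpow N A n i l * A l j \<ge> 0"
  proof
    fix l assume l: "l \<in> {1..N}"
    have "A l j = 0 \<or> A l j = 1" using assms(1) l Suc.prems unfolding zero_one_matrix_def by blast
    then have "A l j \<ge> 0" by auto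
    then show "matpow N A n i l * A l j \<ge> 0" using Suc.IH[OF l] by simp
  qed
  then show ?case unfolding matpow.simps by (intro sum_nonneg) blast
qed

lemma matpow_path:
  assumes "zero_one_matrix N A" "i \<in> {1..N}" "j \<in> {1..N}" "matpow N A n i j > 0"
  shows "\<exists>ws. length ws = Suc n \<and> set ws \<subseteq> {1..N} \<and> hd ws = i \<and> last ws = j \<and>
     (\<forall>m. Suc m < length ws \<longrightarrow> A (ws ! m) (ws ! Suc m) = 1)"
  using assms(3,4)
proof (induction n arbitrary: j)
  case 0
  then have "i = j" by (simp split: if_splits)
  then show ?case using assms(2) by (intro exI[of _ "[i]"]) auto
next
  case (Suc n)
  have "\<exists>l\<in>{1..N}. matpow N A n i l * A l j > 0"
  proof (rule ccontr)
    assume "\<not> ?thesis"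
    then have "(\<Sum>l\<in>{1..N}. matpow N A n i l * A l j) \<le> 0"
      by (intro sum_nonpos) (auto simp: not_less)
    then show False using Suc.prems by simp
  qed
  then obtain l where l: "l \<in> {1..N}" "matpow N A n i l * A l j > 0" by blast
  have A01: "A l j = 0 \<or> A l j = 1" using assms(1) l(1) Suc.prems(1)
    unfolding zero_one_matrix_def by blast
  then have Alj: "A l j = 1" using l(2) by auto
  then have "matpow N A n i l > 0" using l(2) by simp
  then obtain ws where ws: "length ws = Suc n" "set ws \<subseteq> {1..N}" "hd ws = i" "last ws = l"
     "\<forall>m. Suc m < length ws \<longrightarrow> A (ws ! m) (ws ! Suc m) = 1"
    using Suc.IH[OF l(1)] by blast
  have ne: "ws \<noteq> []" using ws(1) by auto
  show ?case
  proof (intro exI[of _ "ws @ [j]"] conjI allI impI)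
    fix m assume m: "Suc m < length (ws @ [j])"
    show "A ((ws @ [j]) ! m) ((ws @ [j]) ! Suc m) = 1"
    proof (cases "Suc m < length ws")
      case True then show ?thesis using ws by (simp add: nth_append)
    next
      case False
      then have "m = length ws - 1" using m by simp
      then show ?thesis using ne ws Alj by (simp add: nth_append last_conv_nth)
    qed
  qed (use ws ne Suc.prems in auto)
qed

locale sys =
  fixes N :: nat and P :: "nat \<Rightarrow> nat \<Rightarrow> real" and f :: "nat \<Rightarrow> real \<Rightarrow> real"
    and \<mu> :: "nat \<Rightarrow> real measure"
  assumes stoch: "stochastic_matrix N P"
    and good: "\<forall>i\<in>{1..N}. good_map (f i)"
    and erg: "ergodic N P f \<mu>"
    and conn: "\<forall>i\<in>{1..N}. \<forall>j\<in>{1..N}. \<exists>ws. adm_word N P ws i j"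
begin

lemma stat: "stationary N P f \<mu>" using erg unfolding ergodic_def by (rule conjunct1)
lemma pf: "prob_family N \<mu>" using stat unfolding stationary_def by (rule conjunct1)
lemma pf1: "k \<in> {1..N} \<Longrightarrow> sets (\<mu> k) = sets borel \<and> emeasure (\<mu> k) (- {0..1}) = 0"
  using pf unfolding prob_family_def by (elim conjE) (erule bspec)
lemma pf2: "(\<Sum>k\<in>{1..N}. emeasure (\<mu> k) UNIV) = 1"
  using pf unfolding prob_family_def by (rule conjunct2)
lemma stoch1: "i \<in> {1..N} \<Longrightarrow> (\<forall>j\<in>{1..N}. P i j \<ge> 0) \<and> (\<Sum>j\<in>{1..N}. P i j) = 1"
  using stoch unfolding stochastic_matrix_def by (erule bspec)

lemma Pnn: "i \<in> {1..N} \<Longrightarrow> j \<in> {1..N} \<Longrightarrow> P i j \<ge> 0"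
  using stoch1 by blast
lemma Psum: "i \<in> {1..N} \<Longrightarrow> (\<Sum>j\<in>{1..N}. P i j) = 1"
  using stoch1 by blast

lemma Pm_nn: "i \<in> {1..N} \<Longrightarrow> j \<in> {1..N} \<Longrightarrow> 0 \<le> P i j * measure M B"
  using Pnn by simp

lemma sets_mu: "k \<in> {1..N} \<Longrightarrow> sets (\<mu> k) = sets borel"
  by (rule conjunct1[OF pf1])
lemma space_mu: "k \<in> {1..N} \<Longrightarrow> space (\<mu> k) = UNIV"
  using sets_eq_imp_space_eq[OF sets_mu] by simp

lemma mu_le1: "k \<in> {1..N} \<Longrightarrow> emeasure (\<mu> k) UNIV \<le> 1"
proof -
  assume k: "k \<in> {1..N}"
  have "emeasure (\<mu> k) UNIV \<le> (\<Sum>k\<in>{1..N}. emeasure (\<mu> k) UNIV)"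
    by (rule member_le_sum[of k "{1..N}" "\<lambda>k. emeasure (\<mu> k) UNIV"]) (use k in simp_all)
  then show ?thesis using pf2 by simp
qed

lemma fm: "k \<in> {1..N} \<Longrightarrow> finite_measure (\<mu> k)"
proof (rule finite_measureI)
  assume k: "k \<in> {1..N}"
  have "emeasure (\<mu> k) UNIV \<le> 1" using mu_le1[OF k] .
  then have "emeasure (\<mu> k) UNIV \<noteq> \<infinity>" unfolding infinity_ennreal_def by (rule neq_top_trans[OF ennreal_one_neq_top])
  then show "emeasure (\<mu> k) (space (\<mu> k)) \<noteq> \<infinity>" using space_mu[OF k] by simp
qed

lemma em_real: "k \<in> {1..N} \<Longrightarrow> emeasure (\<mu> k) A = ennreal (measure (\<mu> k) A)"
  by (rule finite_measure.emeasure_eq_measure[OF fm])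

lemma out_null: "k \<in> {1..N} \<Longrightarrow> measure (\<mu> k) (- {0..1}) = 0"
  using conjunct2[OF pf1] unfolding measure_def by simp

lemma total: "(\<Sum>k\<in>{1..N}. measure (\<mu> k) UNIV) = 1"
proof -
  have "ennreal (\<Sum>k\<in>{1..N}. measure (\<mu> k) UNIV) = (\<Sum>k\<in>{1..N}. emeasure (\<mu> k) UNIV)"
    by (simp add: em_real)
  also have "\<dots> = 1" using pf2 by simp
  finally show ?thesis by simp
qed

lemma f_cont: "i \<in> {1..N} \<Longrightarrow> continuous_on {0..1} (f i)"
  using good good_cont by blast
lemma f_mono: "i \<in> {1..N} \<Longrightarrow> x \<in> {0..1} \<Longrightarrow> y \<in> {0..1} \<Longrightarrow> x \<le> y \<Longrightarrow> f i x \<le> f i y"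
  using good good_mono by blast
lemma f_range: "i \<in> {1..N} \<Longrightarrow> x \<in> {0..1} \<Longrightarrow> f i x \<in> {0..1}"
  using good good_range by blast

lemma pre_borel:
  assumes i: "i \<in> {1..N}" and A: "A \<in> sets borel"
  shows "f i -` A \<inter> {0..1} \<in> sets borel"
proof -
  define g where "g = (\<lambda>x::real. f i (max 0 (min 1 x)))"
  have "continuous_on UNIV g" unfolding g_def
    by (rule continuous_on_compose2[OF f_cont[OF i]]) (auto intro!: continuous_intros)
  then have "g \<in> borel_measurable borel" by (rule borel_measurable_continuous_onI)
  then have "g -` A \<inter> space borel \<in> sets borel" using A by (rule measurable_sets)
  then have "g -` A \<inter> {0..1} \<in> sets borel" by auto
  moreover have "g -` A \<inter> {0..1} = f i -` A \<inter> {0..1}" unfolding g_def by auto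
  ultimately show ?thesis by simp
qed

lemma stat_real:
  assumes j: "j \<in> {1..N}" and A: "A \<in> sets borel"
  shows "measure (\<mu> j) A = (\<Sum>i\<in>{1..N}. P i j * measure (\<mu> i) (f i -` A \<inter> {0..1}))"
proof -
  have "ennreal (measure (\<mu> j) A) = (\<Sum>i\<in>{1..N}. ennreal (P i j) * emeasure (\<mu> i) (f i -` A \<inter> {0..1}))"
    using stat j A unfolding stationary_def by (simp add: em_real[OF j, symmetric])
  also have "\<dots> = (\<Sum>i\<in>{1..N}. ennreal (P i j * measure (\<mu> i) (f i -` A \<inter> {0..1})))"
  proof (intro sum.cong refl)
    fix i assume i: "i \<in> {1..N}"
    show "ennreal (P i j) * emeasure (\<mu> i) (f i -` A \<inter> {0..1}) = ennreal (P i j * measure (\<mu> i) (f i -` A \<inter> {0..1}))"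
      by (subst em_real[OF i], rule ennreal_mult[OF Pnn[OF i j] measure_nonneg, symmetric])
  qed
  also have "\<dots> = ennreal (\<Sum>i\<in>{1..N}. P i j * measure (\<mu> i) (f i -` A \<inter> {0..1}))"
    by (rule sum_ennreal) (rule Pm_nn[OF _ j])
  finally show ?thesis
    by (subst (asm) ennreal_inj) (auto intro!: sum_nonneg Pm_nn[OF _ j])
qed

end


context sys begin

lemma compl_borel: "- {0..1::real} \<in> sets borel"
  by (rule borel_open) (simp add: open_Compl)

abbreviation m where "m k A \<equiv> measure (\<mu> k) A"

lemma mmono: assumes "k \<in> {1..N}" "A \<subseteq> B" "B \<in> sets borel" shows "m k A \<le> m k B"
proof -
  have "B \<in> sets (\<mu> k)" using assms(3) sets_mu[OF assms(1)] by simp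
  then show ?thesis by (rule finite_measure.finite_measure_mono[OF fm[OF assms(1)] assms(2)])
qed

lemma munion: assumes "k \<in> {1..N}" "A \<in> sets borel" "B \<in> sets borel" "A \<inter> B = {}" shows
   "m k (A \<union> B) = m k A + m k B"
proof -
  have "A \<in> sets (\<mu> k)" "B \<in> sets (\<mu> k)" using assms(2,3) sets_mu[OF assms(1)] by simp_all
  then show ?thesis by (rule finite_measure.finite_measure_Union[OF fm[OF assms(1)] _ _ assms(4)])
qed

lemma mI: assumes k: "k \<in> {1..N}" and A: "A \<in> sets borel" shows "m k (A \<inter> {0..1}) = m k A"
proof -
  have "m k A = m k (A \<inter> {0..1}) + m k (A - {0..1})"
  proof -
    have I: "{0..1::real} \<in> sets borel" by simp
    have h: "m k ((A \<inter> {0..1}) \<union> (A - {0..1})) = m k (A \<inter> {0..1}) + m k (A - {0..1})"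
      by (rule munion[OF k sets.Int[OF A I] sets.Diff[OF A I]]) blast
    have e: "(A \<inter> {0..1}) \<union> (A - {0..1}) = A" by blast
    show ?thesis using h by (simp only: e)
  qed
  moreover have "m k (A - {0..1}) \<le> m k (- {0..1})" by (rule mmono[OF k]) (blast, rule compl_borel)
  moreover have "m k (A - {0..1}) \<ge> 0" by (rule measure_nonneg)
  ultimately show ?thesis using out_null[OF k] by linarith
qed

lemma supp_sub: assumes k: "k \<in> {1..N}" shows "msupp (\<mu> k) \<subseteq> {0..1}"
proof
  fix x assume x: "x \<in> msupp (\<mu> k)"
  show "x \<in> {0..1}"
  proof (rule ccontr)
    assume nx: "x \<notin> {0..1}"
    define e where "e = (if x < 0 then - x else x - 1)"
    have e: "e > 0" using nx e_def by auto
    have "ball x e \<subseteq> - {0..1}" using nx by (auto simp: e_def dist_real_def)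
    then have "emeasure (\<mu> k) (ball x e) \<le> emeasure (\<mu> k) (- {0..1})"
      by (rule emeasure_mono) (simp add: sets_mu[OF k] compl_borel)
    then have "emeasure (\<mu> k) (ball x e) = 0" using conjunct2[OF pf1[OF k]] by simp
    then show False using x e unfolding msupp_def by auto
  qed
qed

lemma supp_iff: "k \<in> {1..N} \<Longrightarrow> x \<in> msupp (\<mu> k) \<longleftrightarrow> (\<forall>e>0. m k (ball x e) > 0)"
  unfolding msupp_def using em_real by (simp add: zero_less_measure_iff)

lemma supp_closed: assumes k: "k \<in> {1..N}" shows "closed (msupp (\<mu> k))"
proof -
  have "open (- msupp (\<mu> k))"
  proof (subst open_subopen, intro ballI)
    fix x assume "x \<in> - msupp (\<mu> k)"
    then obtain e where e: "e > 0" "emeasure (\<mu> k) (ball x e) = 0" unfolding msupp_def by auto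
    have "ball x e \<subseteq> - msupp (\<mu> k)"
    proof
      fix y assume y: "y \<in> ball x e"
      have "ball y (e - dist x y) \<subseteq> ball x e"
      proof
        fix z assume z: "z \<in> ball y (e - dist x y)"
        have "dist x z \<le> dist x y + dist y z" by (rule dist_triangle)
        then show "z \<in> ball x e" using z by simp
      qed
      then have "emeasure (\<mu> k) (ball y (e - dist x y)) \<le> emeasure (\<mu> k) (ball x e)"
        by (rule emeasure_mono) (simp add: sets_mu[OF k])
      then have eq: "emeasure (\<mu> k) (ball y (e - dist x y)) = 0" using e(2) by simp
      have pos: "e - dist x y > 0" using y by simp
      have "\<exists>e'>0. emeasure (\<mu> k) (ball y e') = 0" using pos eq by blast
      then show "y \<in> - msupp (\<mu> k)" unfolding msupp_def by simp
    qed
    then show "\<exists>T. open T \<and> x \<in> T \<and> T \<subseteq> - msupp (\<mu> k)" using e(1)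
      by (intro exI[of _ "ball x e"]) simp
  qed
  then show ?thesis by (simp add: closed_def)
qed

lemma supp_step:
  assumes a: "a \<in> {1..N}" and b: "b \<in> {1..N}" and Pab: "P a b > 0" and x: "x \<in> msupp (\<mu> a)"
  shows "f a x \<in> msupp (\<mu> b)"
proof (subst supp_iff[OF b], intro allI impI)
  fix e :: real assume e: "e > 0"
  have xI: "x \<in> {0..1}" using supp_sub[OF a] x by auto
  obtain d where d: "d > 0" "\<forall>y\<in>{0..1}. dist y x < d \<longrightarrow> dist (f a y) (f a x) < e"
    using f_cont[OF a] xI e unfolding continuous_on_iff by metis
  have sub: "ball x d \<inter> {0..1} \<subseteq> f a -` ball (f a x) e \<inter> {0..1}"
    using d by (auto simp: dist_commute)
  have "0 < m a (ball x d)" using supp_iff[OF a] x d by blast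
  also have "\<dots> = m a (ball x d \<inter> {0..1})" using mI[OF a] by simp
  also have "\<dots> \<le> m a (f a -` ball (f a x) e \<inter> {0..1})"
    by (rule mmono[OF a sub pre_borel[OF a]]) simp
  finally have pos: "0 < P a b * m a (f a -` ball (f a x) e \<inter> {0..1})" using Pab by simp
  have "P a b * m a (f a -` ball (f a x) e \<inter> {0..1}) \<le>
        (\<Sum>i\<in>{1..N}. P i b * m i (f i -` ball (f a x) e \<inter> {0..1}))"
    by (rule member_le_sum[OF a]) (auto intro: Pm_nn[OF _ b])
  also have "\<dots> = m b (ball (f a x) e)" using stat_real[OF b] by simp
  finally show "0 < m b (ball (f a x) e)" using pos by linarith
qed

lemma mass_step:
  assumes a: "a \<in> {1..N}" and b: "b \<in> {1..N}" and Pab: "P a b > 0"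
  shows "P a b * m a UNIV \<le> m b UNIV"
proof -
  have "P a b * m a UNIV = P a b * m a (f a -` UNIV \<inter> {0..1})" using mI[OF a, of UNIV] by simp
  also have "\<dots> \<le> (\<Sum>i\<in>{1..N}. P i b * m i (f i -` UNIV \<inter> {0..1}))"
    by (rule member_le_sum[OF a]) (auto intro: Pm_nn[OF _ b])
  also have "\<dots> = m b UNIV" using stat_real[OF b] by simp
  finally show ?thesis .
qed

lemma supp_ne:
  assumes k: "k \<in> {1..N}" and pos: "m k UNIV > 0"
  shows "msupp (\<mu> k) \<noteq> {}"
proof
  assume emp: "msupp (\<mu> k) = {}"
  define T where "T = {ball x e | x e. e > 0 \<and> emeasure (\<mu> k) (ball x e) = 0}"
  have cov: "{0..1::real} \<subseteq> \<Union>T"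
  proof
    fix x :: real assume "x \<in> {0..1}"
    from emp have "x \<notin> msupp (\<mu> k)" by auto
    then obtain e where "e > 0" "emeasure (\<mu> k) (ball x e) = 0" unfolding msupp_def by auto
    then show "x \<in> \<Union>T" unfolding T_def using centre_in_ball by blast
  qed
  have opn: "\<And>B. B \<in> T \<Longrightarrow> open B" by (auto simp: T_def)
  obtain T' where T': "T' \<subseteq> T" "finite T'" "{0..1} \<subseteq> \<Union>T'"
    using compactE[OF compact_Icc cov opn] by blast
  have Ts: "\<And>B. B \<in> T' \<Longrightarrow> B \<in> sets (\<mu> k)"
    using T'(1) opn by (auto simp: sets_mu[OF k] intro!: borel_open)
  have "emeasure (\<mu> k) (\<Union>B\<in>T'. B) \<le> (\<Sum>B\<in>T'. emeasure (\<mu> k) B)"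
    by (rule emeasure_subadditive_finite[OF T'(2)]) (use Ts in blast)
  also have "\<dots> = 0" using T'(1) by (intro sum.neutral) (auto simp: T_def)
  finally have "emeasure (\<mu> k) (\<Union>T') = 0" by simp
  then have "emeasure (\<mu> k) {0..1} = 0"
  proof -
    have "\<Union>T' \<in> sets (\<mu> k)" by (rule sets.finite_Union[OF T'(2)]) (use Ts in blast)
    then have "emeasure (\<mu> k) {0..1} \<le> emeasure (\<mu> k) (\<Union>T')" using T'(3) by (rule emeasure_mono[rotated])
    then show ?thesis using \<open>emeasure (\<mu> k) (\<Union>T') = 0\<close> by simp
  qed
  then have "m k {0..1} = 0" by (simp add: measure_def)
  then have "m k UNIV = 0" using mI[OF k, of UNIV] by simp
  then show False using pos by simp
qed

end


context sys begin

lemma null_eq: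
  assumes k: "k \<in> {1..N}" and sub: "S1 \<subseteq> S2" and b1: "S1 \<in> sets borel" and b2: "S2 \<in> sets borel"
    and Z: "S2 - S1 \<subseteq> Z" "Z \<in> sets borel" "m k Z = 0"
  shows "m k S1 = m k S2"
proof -
  have "m k (S1 \<union> (S2 - S1)) = m k S1 + m k (S2 - S1)"
    by (rule munion[OF k b1 sets.Diff[OF b2 b1]]) blast
  moreover have "S1 \<union> (S2 - S1) = S2" using sub by blast
  moreover have "m k (S2 - S1) \<le> m k Z" by (rule mmono[OF k Z(1) Z(2)])
  moreover have "m k (S2 - S1) \<ge> 0" by (rule measure_nonneg)
  ultimately show ?thesis using Z(3) by simp
qed

lemma sum_nn_zero:
  fixes g :: "nat \<Rightarrow> real"
  assumes "(\<Sum>i\<in>{1..N}. g i) = 0" "\<And>i. i \<in> {1..N} \<Longrightarrow> g i \<ge> 0" "i \<in> {1..N}"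
  shows "g i = 0"
  using sum_nonneg_eq_0_iff[of "{1..N}" g] assms by simp

lemma dens_em:
  assumes k: "k \<in> {1..N}" and B: "B \<in> sets borel" and A: "A \<in> sets borel" and c: "c \<ge> 0"
  shows "emeasure (density (\<mu> k) (\<lambda>x. ennreal c * indicator B x)) A = ennreal (c * m k (A \<inter> B))"
proof -
  have B': "B \<in> sets (\<mu> k)" using B sets_mu[OF k] by simp
  have A': "A \<in> sets (\<mu> k)" using A sets_mu[OF k] by simp
  have AB': "A \<inter> B \<in> sets (\<mu> k)" using A' B' by (rule sets.Int)
  have meas: "(\<lambda>x. ennreal c * indicator B x) \<in> borel_measurable (\<mu> k)"
    by (intro borel_measurable_times_ennreal borel_measurable_const borel_measurable_indicator B')
  have "emeasure (density (\<mu> k) (\<lambda>x. ennreal c * indicator B x)) A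
      = (\<integral>\<^sup>+ x. ennreal c * indicator B x * indicator A x \<partial>\<mu> k)"
    by (rule emeasure_density[OF meas A'])
  also have "\<dots> = (\<integral>\<^sup>+ x. ennreal c * indicator (A \<inter> B) x \<partial>\<mu> k)"
    by (rule nn_integral_cong) (simp split: split_indicator)
  also have "\<dots> = ennreal c * emeasure (\<mu> k) (A \<inter> B)"
    by (rule nn_integral_cmult_indicator[OF AB'])
  also have "\<dots> = ennreal (c * m k (A \<inter> B))"
    by (subst em_real[OF k], rule ennreal_mult[OF c measure_nonneg, symmetric])
  finally show ?thesis .
qed

lemma dens_stat:
  assumes W: "\<And>j. j \<in> {1..N} \<Longrightarrow> W j \<in> sets borel" and c: "c \<ge> 0"
   and R: "\<And>j A. j \<in> {1..N} \<Longrightarrow> A \<in> sets borel \<Longrightarrow>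
      m j (A \<inter> W j) = (\<Sum>i\<in>{1..N}. P i j * m i (f i -` A \<inter> {0..1} \<inter> W i))"
   and tot: "c * (\<Sum>k\<in>{1..N}. m k (W k)) = 1"
  shows "stationary N P f (\<lambda>k. density (\<mu> k) (\<lambda>x. ennreal c * indicator (W k) x))"
proof -
  define \<nu> where "\<nu> = (\<lambda>k. density (\<mu> k) (\<lambda>x. ennreal c * indicator (W k) x))"
  have e: "\<And>k A. k \<in> {1..N} \<Longrightarrow> A \<in> sets borel \<Longrightarrow> emeasure (\<nu> k) A = ennreal (c * m k (A \<inter> W k))"
    unfolding \<nu>_def by (rule dens_em[OF _ W _ c])
  have "prob_family N \<nu>" unfolding prob_family_def
  proof (intro conjI ballI)
    fix k assume k: "k \<in> {1..N}"
    show "sets (\<nu> k) = sets borel" unfolding \<nu>_def by (simp add: sets_mu[OF k])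
    have "m k (- {0..1} \<inter> W k) \<le> m k (- {0..1})" by (rule mmono[OF k _ compl_borel]) blast
    then have "m k (- {0..1} \<inter> W k) = 0" using out_null[OF k] measure_nonneg[of "\<mu> k" "- {0..1} \<inter> W k"] by linarith
    then show "emeasure (\<nu> k) (- {0..1}) = 0" using e[OF k compl_borel] by simp
  next
    have "(\<Sum>k\<in>{1..N}. emeasure (\<nu> k) UNIV) = (\<Sum>k\<in>{1..N}. ennreal (c * m k (W k)))"
      by (intro sum.cong refl) (simp add: e)
    also have "\<dots> = ennreal (\<Sum>k\<in>{1..N}. c * m k (W k))"
      by (rule sum_ennreal) (simp add: c)
    also have "(\<Sum>k\<in>{1..N}. c * m k (W k)) = 1" using tot by (simp add: sum_distrib_left)
    finally show "(\<Sum>k\<in>{1..N}. emeasure (\<nu> k) UNIV) = 1" by simp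
  qed
  moreover have "\<forall>j\<in>{1..N}. \<forall>A\<in>sets (borel :: real measure).
        emeasure (\<nu> j) A = (\<Sum>i\<in>{1..N}. ennreal (P i j) * emeasure (\<nu> i) (f i -` A \<inter> {0..1}))"
  proof (intro ballI)
    fix j and A :: "real set" assume j: "j \<in> {1..N}" and A: "A \<in> sets borel"
    have "(\<Sum>i\<in>{1..N}. ennreal (P i j) * emeasure (\<nu> i) (f i -` A \<inter> {0..1}))
        = (\<Sum>i\<in>{1..N}. ennreal (P i j * (c * m i (f i -` A \<inter> {0..1} \<inter> W i))))"
    proof (intro sum.cong refl)
      fix i assume i: "i \<in> {1..N}"
      show "ennreal (P i j) * emeasure (\<nu> i) (f i -` A \<inter> {0..1}) = ennreal (P i j * (c * m i (f i -` A \<inter> {0..1} \<inter> W i)))"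
        by (subst e[OF i pre_borel[OF i A]], rule ennreal_mult[symmetric]) (simp_all add: Pnn[OF i j] c)
    qed
    also have "\<dots> = ennreal (\<Sum>i\<in>{1..N}. P i j * (c * m i (f i -` A \<inter> {0..1} \<inter> W i)))"
    proof (rule sum_ennreal)
      fix i assume i: "i \<in> {1..N}"
      show "0 \<le> P i j * (c * m i (f i -` A \<inter> {0..1} \<inter> W i))" using Pnn[OF i j] c by simp
    qed
    also have "(\<Sum>i\<in>{1..N}. P i j * (c * m i (f i -` A \<inter> {0..1} \<inter> W i))) = c * m j (A \<inter> W j)"
      by (simp add: R[OF j A] sum_distrib_left mult.left_commute)
    finally show "emeasure (\<nu> j) A = (\<Sum>i\<in>{1..N}. ennreal (P i j) * emeasure (\<nu> i) (f i -` A \<inter> {0..1}))"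
      using e[OF j A] by simp
  qed
  ultimately show ?thesis unfolding stationary_def \<nu>_def by (intro conjI)
qed

context
  fixes V :: "nat \<Rightarrow> real set"
  assumes Vb: "\<And>j. j \<in> {1..N} \<Longrightarrow> V j \<in> sets borel"
    and inv: "\<And>i j x. i \<in> {1..N} \<Longrightarrow> j \<in> {1..N} \<Longrightarrow> P i j > 0 \<Longrightarrow> x \<in> {0..1} \<Longrightarrow> x \<in> V i \<Longrightarrow> f i x \<in> V j"
begin

definition X where "X i j = m i (f i -` V j \<inter> {0..1} - V i)"

lemma X_nn: "X i j \<ge> 0" unfolding X_def by simp

lemma split_ij:
  assumes i: "i \<in> {1..N}" and j: "j \<in> {1..N}"
  shows "P i j * m i (f i -` V j \<inter> {0..1}) = P i j * m i (V i) + P i j * X i j"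
proof (cases "P i j > 0")
  case True
  have sub: "V i \<inter> {0..1} \<subseteq> f i -` V j \<inter> {0..1}" using inv[OF i j True] by blast
  have b1: "V i \<inter> {0..1} \<in> sets borel" using Vb[OF i] by simp
  have b2: "f i -` V j \<inter> {0..1} \<in> sets borel" by (rule pre_borel[OF i Vb[OF j]])
  have "m i ((V i \<inter> {0..1}) \<union> (f i -` V j \<inter> {0..1} - V i)) = m i (V i \<inter> {0..1}) + m i (f i -` V j \<inter> {0..1} - V i)"
    by (rule munion[OF i b1 sets.Diff[OF b2 Vb[OF i]]]) blast
  moreover have "(V i \<inter> {0..1}) \<union> (f i -` V j \<inter> {0..1} - V i) = f i -` V j \<inter> {0..1}" using sub by blast
  moreover have "m i (V i \<inter> {0..1}) = m i (V i)" by (rule mI[OF i Vb[OF i]])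
  ultimately have "m i (f i -` V j \<inter> {0..1}) = m i (V i) + X i j" unfolding X_def by simp
  then show ?thesis by (simp add: distrib_left)
next
  case False
  then have "P i j = 0" using Pnn[OF i j] by simp
  then show ?thesis by simp
qed

lemma X_zero:
  assumes i: "i \<in> {1..N}" and j: "j \<in> {1..N}" and Pij: "P i j > 0"
  shows "X i j = 0"
proof -
  have "(\<Sum>j\<in>{1..N}. m j (V j)) = (\<Sum>j\<in>{1..N}. \<Sum>i\<in>{1..N}. P i j * m i (f i -` V j \<inter> {0..1}))"
    by (intro sum.cong refl) (rule stat_real[OF _ Vb])
  also have "\<dots> = (\<Sum>j\<in>{1..N}. \<Sum>i\<in>{1..N}. P i j * m i (V i) + P i j * X i j)"
    by (intro sum.cong refl) (rule split_ij)
  also have "\<dots> = (\<Sum>j\<in>{1..N}. \<Sum>i\<in>{1..N}. P i j * m i (V i)) + (\<Sum>j\<in>{1..N}. \<Sum>i\<in>{1..N}. P i j * X i j)"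
    by (simp add: sum.distrib)
  also have "(\<Sum>j\<in>{1..N}. \<Sum>i\<in>{1..N}. P i j * m i (V i)) = (\<Sum>i\<in>{1..N}. \<Sum>j\<in>{1..N}. P i j * m i (V i))"
    by (rule sum.swap)
  also have "\<dots> = (\<Sum>i\<in>{1..N}. (\<Sum>j\<in>{1..N}. P i j) * m i (V i))"
    by (simp add: sum_distrib_right)
  also have "\<dots> = (\<Sum>i\<in>{1..N}. m i (V i))"
  proof (intro sum.cong refl)
    fix i assume i: "i \<in> {1..N}"
    show "(\<Sum>j\<in>{1..N}. P i j) * m i (V i) = m i (V i)" by (simp only: Psum[OF i] mult_1)
  qed
  finally have z: "(\<Sum>j\<in>{1..N}. \<Sum>i\<in>{1..N}. P i j * X i j) = 0" by simp
  have nn: "\<And>j. j \<in> {1..N} \<Longrightarrow> (\<Sum>i\<in>{1..N}. P i j * X i j) \<ge> 0"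
    by (rule sum_nonneg) (simp add: Pnn X_nn)
  have "(\<Sum>i\<in>{1..N}. P i j * X i j) = 0" by (rule sum_nn_zero[OF z nn j])
  moreover have nn2: "\<And>i'. i' \<in> {1..N} \<Longrightarrow> P i' j * X i' j \<ge> 0"
    using Pnn[OF _ j] X_nn by simp
  ultimately have "P i j * X i j = 0" using sum_nn_zero[of "\<lambda>i. P i j * X i j", OF _ nn2 i] by blast
  then show ?thesis using Pij by simp
qed

lemma R1:
  assumes j: "j \<in> {1..N}" and A: "A \<in> sets borel"
  shows "m j (A \<inter> V j) = (\<Sum>i\<in>{1..N}. P i j * m i (f i -` A \<inter> {0..1} \<inter> V i))"
proof -
  have "m j (A \<inter> V j) = (\<Sum>i\<in>{1..N}. P i j * m i (f i -` (A \<inter> V j) \<inter> {0..1}))"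
    by (rule stat_real[OF j sets.Int[OF A Vb[OF j]]])
  also have "\<dots> = (\<Sum>i\<in>{1..N}. P i j * m i (f i -` A \<inter> {0..1} \<inter> V i))"
  proof (intro sum.cong refl)
    fix i assume i: "i \<in> {1..N}"
    show "P i j * m i (f i -` (A \<inter> V j) \<inter> {0..1}) = P i j * m i (f i -` A \<inter> {0..1} \<inter> V i)"
    proof (cases "P i j > 0")
      case True
      have "m i (f i -` A \<inter> {0..1} \<inter> V i) = m i (f i -` (A \<inter> V j) \<inter> {0..1})"
      proof (rule null_eq[OF i])
        show "f i -` A \<inter> {0..1} \<inter> V i \<subseteq> f i -` (A \<inter> V j) \<inter> {0..1}" using inv[OF i j True] by blast
        show "f i -` A \<inter> {0..1} \<inter> V i \<in> sets borel" using pre_borel[OF i A] Vb[OF i] by simp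
        show "f i -` (A \<inter> V j) \<inter> {0..1} \<in> sets borel" by (rule pre_borel[OF i sets.Int[OF A Vb[OF j]]])
        show "f i -` (A \<inter> V j) \<inter> {0..1} - f i -` A \<inter> {0..1} \<inter> V i \<subseteq> f i -` V j \<inter> {0..1} - V i" by blast
        show "f i -` V j \<inter> {0..1} - V i \<in> sets borel" using pre_borel[OF i Vb[OF j]] Vb[OF i] by simp
        show "m i (f i -` V j \<inter> {0..1} - V i) = 0" using X_zero[OF i j True] unfolding X_def .
      qed
      then show ?thesis by simp
    next
      case False
      then have "P i j = 0" using Pnn[OF i j] by simp
      then show ?thesis by simp
    qed
  qed
  finally show ?thesis .
qed

lemma R2:
  assumes j: "j \<in> {1..N}" and A: "A \<in> sets borel"
  shows "m j (A \<inter> - V j) = (\<Sum>i\<in>{1..N}. P i j * m i (f i -` A \<inter> {0..1} \<inter> - V i))"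
proof -
  have Vc: "\<And>j. j \<in> {1..N} \<Longrightarrow> - V j \<in> sets borel" using Vb by simp
  have "m j (A \<inter> - V j) = (\<Sum>i\<in>{1..N}. P i j * m i (f i -` (A \<inter> - V j) \<inter> {0..1}))"
    by (rule stat_real[OF j sets.Int[OF A Vc[OF j]]])
  also have "\<dots> = (\<Sum>i\<in>{1..N}. P i j * m i (f i -` A \<inter> {0..1} \<inter> - V i))"
  proof (intro sum.cong refl)
    fix i assume i: "i \<in> {1..N}"
    show "P i j * m i (f i -` (A \<inter> - V j) \<inter> {0..1}) = P i j * m i (f i -` A \<inter> {0..1} \<inter> - V i)"
    proof (cases "P i j > 0")
      case True
      have "m i (f i -` (A \<inter> - V j) \<inter> {0..1}) = m i (f i -` A \<inter> {0..1} \<inter> - V i)"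
      proof (rule null_eq[OF i])
        show "f i -` (A \<inter> - V j) \<inter> {0..1} \<subseteq> f i -` A \<inter> {0..1} \<inter> - V i" using inv[OF i j True] by blast
        show "f i -` A \<inter> {0..1} \<inter> - V i \<in> sets borel" using pre_borel[OF i A] Vc[OF i] by simp
        show "f i -` (A \<inter> - V j) \<inter> {0..1} \<in> sets borel" by (rule pre_borel[OF i sets.Int[OF A Vc[OF j]]])
        show "f i -` A \<inter> {0..1} \<inter> - V i - f i -` (A \<inter> - V j) \<inter> {0..1} \<subseteq> f i -` V j \<inter> {0..1} - V i" by blast
        show "f i -` V j \<inter> {0..1} - V i \<in> sets borel" using pre_borel[OF i Vb[OF j]] Vb[OF i] by simp
        show "m i (f i -` V j \<inter> {0..1} - V i) = 0" using X_zero[OF i j True] unfolding X_def .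
      qed
      then show ?thesis by simp
    next
      case False
      then have "P i j = 0" using Pnn[OF i j] by simp
      then show ?thesis by simp
    qed
  qed
  finally show ?thesis .
qed

lemma key_main:
  assumes k0: "k0 \<in> {1..N}" and pos0: "m k0 (V k0) > 0" and j0: "j0 \<in> {1..N}"
  shows "m j0 (- V j0) = 0"
proof -
  define T where "T = (\<Sum>j\<in>{1..N}. m j (V j))"
  define s where "s = (\<Sum>j\<in>{1..N}. m j (- V j))"
  have Vc: "\<And>j. j \<in> {1..N} \<Longrightarrow> - V j \<in> sets borel" using Vb by simp
  have spl: "\<And>j. j \<in> {1..N} \<Longrightarrow> m j (V j) + m j (- V j) = m j UNIV"
  proof -
    fix j assume j: "j \<in> {1..N}"
    have "m j (V j \<union> - V j) = m j (V j) + m j (- V j)" by (rule munion[OF j Vb[OF j] Vc[OF j]]) blast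
    then show "m j (V j) + m j (- V j) = m j UNIV" by simp
  qed
  have Ts: "T + s = 1" unfolding T_def s_def
    using total by (simp add: sum.distrib[symmetric] spl)
  have "m k0 (V k0) \<le> T" unfolding T_def
    by (rule member_le_sum[of k0 "{1..N}" "\<lambda>j. m j (V j)"]) (rule k0, simp, simp)
  then have Tpos: "T > 0" using pos0 by linarith
  have snn: "s \<ge> 0" unfolding s_def by (rule sum_nonneg) simp
  show ?thesis
  proof (cases "s = 0")
    case True
    show ?thesis by (rule sum_nn_zero[of "\<lambda>j. m j (- V j)", OF _ _ j0]) (use True s_def in simp_all)
  next
    case False
    then have Tlt: "T < 1" using Ts snn by linarith
    define \<nu>1 where "\<nu>1 = (\<lambda>k. density (\<mu> k) (\<lambda>x. ennreal (1/T) * indicator (V k) x))"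
    define \<nu>2 where "\<nu>2 = (\<lambda>k. density (\<mu> k) (\<lambda>x. ennreal (1/(1-T)) * indicator (- V k) x))"
    have c1: "1/T \<ge> 0" using Tpos by simp
    have c2: "1/(1-T) \<ge> 0" using Tlt by simp
    have e1: "\<And>k A. k \<in> {1..N} \<Longrightarrow> A \<in> sets borel \<Longrightarrow> emeasure (\<nu>1 k) A = ennreal (1/T * m k (A \<inter> V k))"
      unfolding \<nu>1_def by (rule dens_em[OF _ Vb _ c1])
    have e2: "\<And>k A. k \<in> {1..N} \<Longrightarrow> A \<in> sets borel \<Longrightarrow> emeasure (\<nu>2 k) A = ennreal (1/(1-T) * m k (A \<inter> - V k))"
      unfolding \<nu>2_def by (rule dens_em[OF _ Vc _ c2])
    have st1: "stationary N P f \<nu>1" unfolding \<nu>1_def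
    proof (rule dens_stat[OF Vb c1 R1])
      have "(\<Sum>k\<in>{1..N}. m k (V k)) = T" unfolding T_def ..
      then show "1 / T * (\<Sum>k\<in>{1..N}. m k (V k)) = 1" using Tpos by simp
    qed
    have tot2: "1/(1-T) * (\<Sum>k\<in>{1..N}. m k (- V k)) = 1"
    proof -
      have "(\<Sum>k\<in>{1..N}. m k (- V k)) = s" unfolding s_def ..
      moreover have "1 - T = s" using Ts by linarith
      ultimately show ?thesis using False by simp
    qed
    have st2: "stationary N P f \<nu>2" unfolding \<nu>2_def
      by (rule dens_stat[OF Vc c2 R2 tot2])
    have mix: "\<forall>k\<in>{1..N}. \<forall>A\<in>sets borel. emeasure (\<mu> k) A =
            ennreal T * emeasure (\<nu>1 k) A + ennreal (1 - T) * emeasure (\<nu>2 k) A"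
    proof (intro ballI)
      fix k and A :: "real set" assume k: "k \<in> {1..N}" and A: "A \<in> sets borel"
      have a: "ennreal T * emeasure (\<nu>1 k) A = ennreal (m k (A \<inter> V k))"
        using Tpos by (simp add: e1[OF k A] ennreal_mult[symmetric])
      have b: "ennreal (1 - T) * emeasure (\<nu>2 k) A = ennreal (m k (A \<inter> - V k))"
        using Tlt by (simp add: e2[OF k A] ennreal_mult[symmetric])
      have "m k ((A \<inter> V k) \<union> (A \<inter> - V k)) = m k (A \<inter> V k) + m k (A \<inter> - V k)"
        by (rule munion[OF k sets.Int[OF A Vb[OF k]] sets.Int[OF A Vc[OF k]]]) blast
      moreover have "(A \<inter> V k) \<union> (A \<inter> - V k) = A" by blast
      ultimately have "m k A = m k (A \<inter> V k) + m k (A \<inter> - V k)" by simp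
      then show "emeasure (\<mu> k) A = ennreal T * emeasure (\<nu>1 k) A + ennreal (1 - T) * emeasure (\<nu>2 k) A"
        unfolding a b by (simp add: em_real[OF k])
    qed
    have E: "\<forall>\<nu>1 \<nu>2 (t::real). stationary N P f \<nu>1 \<and> stationary N P f \<nu>2 \<and> 0 < t \<and> t < 1 \<and>
        (\<forall>k\<in>{1..N}. \<forall>A\<in>sets borel. emeasure (\<mu> k) A =
            ennreal t * emeasure (\<nu>1 k) A + ennreal (1 - t) * emeasure (\<nu>2 k) A)
      \<longrightarrow> (\<forall>k\<in>{1..N}. \<forall>A\<in>sets borel. emeasure (\<nu>1 k) A = emeasure (\<mu> k) A)"
      using erg unfolding ergodic_def by (rule conjunct2)
    note H = spec[OF spec[OF spec[OF E, of \<nu>1], of \<nu>2], of T]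
    have eq: "\<forall>k\<in>{1..N}. \<forall>A\<in>sets borel. emeasure (\<nu>1 k) A = emeasure (\<mu> k) A"
      by (rule mp[OF H]) (intro conjI st1 st2 Tpos Tlt mix)
    have "emeasure (\<nu>1 j0) (- V j0) = emeasure (\<mu> j0) (- V j0)"
      using eq j0 Vc[OF j0] by blast
    moreover have "emeasure (\<nu>1 j0) (- V j0) = 0" by (simp add: e1[OF j0 Vc[OF j0]])
    ultimately show ?thesis by (simp add: em_real[OF j0])
  qed
qed

end

end


context sys begin

abbreviation S where "S k \<equiv> msupp (\<mu> k)"

lemma comp_props:
  assumes "adm_comp N P f i j G"
  shows "j \<in> {1..N} \<and> (\<forall>x\<in>{0..1}. G x \<in> {0..1}) \<and>
     (\<forall>x\<in>{0..1}. \<forall>y\<in>{0..1}. x \<le> y \<longrightarrow> G x \<le> G y) \<and> (\<forall>x\<in>S i. G x \<in> S j)"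
proof -
  obtain ws where ws: "adm_word N P ws i j" "G = word_comp f ws"
    using assms unfolding adm_comp_def by blast
  have ne: "ws \<noteq> []" using ws(1) unfolding adm_word_def by auto
  have i: "i \<in> {1..N}" using ws(1) hd_in_set[OF ne] unfolding adm_word_def by auto
  show ?thesis unfolding ws(2)
  proof (rule adm_word_induct[OF ws(1), where Q = "\<lambda>b G. b \<in> {1..N} \<and> (\<forall>x\<in>{0..1}. G x \<in> {0..1}) \<and>
     (\<forall>x\<in>{0..1}. \<forall>y\<in>{0..1}. x \<le> y \<longrightarrow> G x \<le> G y) \<and> (\<forall>x\<in>S i. G x \<in> S b)"])
    fix b assume b: "b \<in> {1..N}" and Pib: "P i b > 0"
    show "b \<in> {1..N} \<and> (\<forall>x\<in>{0..1}. f i x \<in> {0..1}) \<and>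
     (\<forall>x\<in>{0..1}. \<forall>y\<in>{0..1}. x \<le> y \<longrightarrow> f i x \<le> f i y) \<and> (\<forall>x\<in>S i. f i x \<in> S b)"
      using b f_range[OF i] f_mono[OF i] supp_step[OF i b Pib] by blast
  next
    fix l b G
    assume Q: "l \<in> {1..N} \<and> (\<forall>x\<in>{0..1}. G x \<in> {0..1}) \<and>
     (\<forall>x\<in>{0..1}. \<forall>y\<in>{0..1}. x \<le> y \<longrightarrow> G x \<le> G y) \<and> (\<forall>x\<in>S i. G x \<in> S l)"
      and l: "l \<in> {1..N}" and b: "b \<in> {1..N}" and Plb: "P l b > 0"
    have r: "\<forall>x\<in>{0..1}. (f l \<circ> G) x \<in> {0..1}" using Q f_range[OF l] by simp
    have mo: "\<forall>x\<in>{0..1}. \<forall>y\<in>{0..1}. x \<le> y \<longrightarrow> (f l \<circ> G) x \<le> (f l \<circ> G) y"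
      using Q f_mono[OF l] by simp
    have su: "\<forall>x\<in>S i. (f l \<circ> G) x \<in> S b" using Q supp_step[OF l b Plb] by simp
    show "b \<in> {1..N} \<and> (\<forall>x\<in>{0..1}. (f l \<circ> G) x \<in> {0..1}) \<and>
     (\<forall>x\<in>{0..1}. \<forall>y\<in>{0..1}. x \<le> y \<longrightarrow> (f l \<circ> G) x \<le> (f l \<circ> G) y) \<and> (\<forall>x\<in>S i. (f l \<circ> G) x \<in> S b)"
      using b r mo su by blast
  qed
qed

lemma comp_exists: "i \<in> {1..N} \<Longrightarrow> j \<in> {1..N} \<Longrightarrow> \<exists>G. adm_comp N P f i j G"
  using conn unfolding adm_comp_def by blast

lemma mass_pos:
  assumes j: "j \<in> {1..N}" shows "m j UNIV > 0"
proof -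
  obtain l where l: "l \<in> {1..N}" "m l UNIV > 0"
  proof (rule ccontr)
    assume "\<not> thesis"
    then have "\<forall>l\<in>{1..N}. m l UNIV \<le> 0" using that by (meson not_le)
    then have "(\<Sum>l\<in>{1..N}. m l UNIV) \<le> 0" by (intro sum_nonpos) blast
    then show False using total by simp
  qed
  obtain ws where ws: "adm_word N P ws l j" using conn l(1) j by blast
  have "j \<in> {1..N} \<and> m j UNIV > 0"
  proof (rule adm_word_induct[OF ws, where Q = "\<lambda>b G. b \<in> {1..N} \<and> m b UNIV > 0"])
    fix b assume b: "b \<in> {1..N}" and Plb: "P l b > 0"
    have "P l b * m l UNIV > 0" using Plb l(2) by simp
    then show "b \<in> {1..N} \<and> m b UNIV > 0" using mass_step[OF l(1) b Plb] b by linarith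
  next
    fix a b G assume Q: "a \<in> {1..N} \<and> m a UNIV > 0" and a: "a \<in> {1..N}" and b: "b \<in> {1..N}" and Pab: "P a b > 0"
    have "P a b * m a UNIV > 0" using Pab Q by simp
    then show "b \<in> {1..N} \<and> m b UNIV > 0" using mass_step[OF a b Pab] b by linarith
  qed
  then show ?thesis by blast
qed

lemma S_ne: "j \<in> {1..N} \<Longrightarrow> S j \<noteq> {}" using supp_ne mass_pos by blast
lemma S_bdd_below: "j \<in> {1..N} \<Longrightarrow> bdd_below (S j)"
  using supp_sub unfolding bdd_below_def by fastforce
lemma S_bdd_above: "j \<in> {1..N} \<Longrightarrow> bdd_above (S j)"
  using supp_sub unfolding bdd_above_def by fastforce
lemma A_in: "j \<in> {1..N} \<Longrightarrow> A_mu \<mu> j \<in> S j"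
  unfolding A_mu_def by (rule closed_contains_Inf[OF S_ne S_bdd_below supp_closed])
lemma B_in: "j \<in> {1..N} \<Longrightarrow> B_mu \<mu> j \<in> S j"
  unfolding B_mu_def by (rule closed_contains_Sup[OF S_ne S_bdd_above supp_closed])
lemma A_le: "j \<in> {1..N} \<Longrightarrow> x \<in> S j \<Longrightarrow> A_mu \<mu> j \<le> x"
  unfolding A_mu_def by (rule cInf_lower[OF _ S_bdd_below])
lemma B_ge: "j \<in> {1..N} \<Longrightarrow> x \<in> S j \<Longrightarrow> x \<le> B_mu \<mu> j"
  unfolding B_mu_def by (rule cSup_upper[OF _ S_bdd_above])
lemma S_I: "j \<in> {1..N} \<Longrightarrow> x \<in> S j \<Longrightarrow> x \<in> {0..1}"
  using supp_sub by blast

end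


context sys begin

lemma partA:
  assumes g3: "G3 N P f" and k: "k \<in> {1..N}" and k': "k' \<in> {1..N}" and eps: "\<epsilon> > 0"
  shows "\<exists>G. adm_comp N P f k k' G \<and> G ` {A_mu \<mu> k..B_mu \<mu> k} \<subseteq> ball (A_mu \<mu> k') \<epsilon>"
proof -
  define a where "a = A_mu \<mu>"
  define b where "b = B_mu \<mu>"
  define C where "C j = {G (b k) | G. adm_comp N P f k j G}" for j
  define c where "c j = Inf (C j)" for j
  have bk: "b k \<in> S k" unfolding b_def by (rule B_in[OF k])
  have C_ne: "\<And>j. j \<in> {1..N} \<Longrightarrow> C j \<noteq> {}" unfolding C_def using comp_exists[OF k] by blast
  have C_S: "\<And>j y. y \<in> C j \<Longrightarrow> y \<in> S j"
    unfolding C_def using comp_props bk by blast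
  have C_j: "\<And>j y. y \<in> C j \<Longrightarrow> j \<in> {1..N}"
    unfolding C_def using comp_props by blast
  have C_I: "\<And>j y. y \<in> C j \<Longrightarrow> y \<in> {0..1}" using C_S C_j S_I by blast
  have C_bdd: "\<And>j. bdd_below (C j)" unfolding bdd_below_def using C_I
    by (metis atLeastAtMost_iff)
  have c_le: "\<And>j y. y \<in> C j \<Longrightarrow> c j \<le> y" unfolding c_def by (rule cInf_lower[OF _ C_bdd])
  have c_ge0: "\<And>j. j \<in> {1..N} \<Longrightarrow> c j \<ge> 0" unfolding c_def
    by (rule cInf_greatest[OF C_ne]) (use C_I in auto)
  have c_I: "\<And>j. j \<in> {1..N} \<Longrightarrow> c j \<in> {0..1}"
  proof -
    fix j assume j: "j \<in> {1..N}"
    obtain y where y: "y \<in> C j" using C_ne[OF j] by blast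
    show "c j \<in> {0..1}" using c_le[OF y] C_I[OF y] c_ge0[OF j] by auto
  qed
  have c_le_b: "\<And>j. j \<in> {1..N} \<Longrightarrow> c j \<le> b j"
  proof -
    fix j assume j: "j \<in> {1..N}"
    obtain y where y: "y \<in> C j" using C_ne[OF j] by blast
    have "y \<le> b j" unfolding b_def by (rule B_ge[OF j C_S[OF y]])
    then show "c j \<le> b j" using c_le[OF y] by linarith
  qed
  have P1: "\<And>i j. i \<in> {1..N} \<Longrightarrow> j \<in> {1..N} \<Longrightarrow> P i j > 0 \<Longrightarrow> c j \<le> f i (c i)"
  proof (rule ccontr)
    fix i j assume i: "i \<in> {1..N}" and j: "j \<in> {1..N}" and Pij: "P i j > 0" and n: "\<not> c j \<le> f i (c i)"
    define e where "e = c j - f i (c i)"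
    have e: "e > 0" using n e_def by simp
    obtain d where d: "d > 0" "\<forall>y\<in>{0..1}. dist y (c i) < d \<longrightarrow> dist (f i y) (f i (c i)) < e"
      using f_cont[OF i] c_I[OF i] e unfolding continuous_on_iff by metis
    have "Inf (C i) < c i + d" using d(1) c_def by simp
    then obtain y where y: "y \<in> C i" "y < c i + d" using cInf_lessD[OF C_ne[OF i]] by blast
    have yc: "c i \<le> y" by (rule c_le[OF y(1)])
    have "dist y (c i) < d" using y(2) yc by (simp add: dist_real_def)
    then have "dist (f i y) (f i (c i)) < e" using d(2) C_I[OF y(1)] by blast
    then have fy: "f i y < c j" unfolding e_def dist_real_def by linarith
    obtain G where G: "adm_comp N P f k i G" "y = G (b k)" using y(1) unfolding C_def by blast
    have ac: "adm_comp N P f k j (f i \<circ> G)" by (rule adm_comp_snoc[OF G(1) Pij j])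
    have "f i y \<in> C j" unfolding C_def mem_Collect_eq
      by (rule exI[of _ "f i \<circ> G"]) (simp add: G(2) ac)
    then have "c j \<le> f i y" by (rule c_le)
    then show False using fy by linarith
  qed
  define V where "V j = {c j..}" for j
  have Vb: "\<And>j. j \<in> {1..N} \<Longrightarrow> V j \<in> sets borel" unfolding V_def by simp
  have inv: "\<And>i j x. i \<in> {1..N} \<Longrightarrow> j \<in> {1..N} \<Longrightarrow> P i j > 0 \<Longrightarrow> x \<in> {0..1} \<Longrightarrow> x \<in> V i \<Longrightarrow> f i x \<in> V j"
  proof -
    fix i j x assume i: "i \<in> {1..N}" and j: "j \<in> {1..N}" and Pij: "P i j > 0" and x: "x \<in> {0..1}" and xV: "x \<in> V i"
    have "f i (c i) \<le> f i x" using f_mono[OF i c_I[OF i] x] xV unfolding V_def by simp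
    then show "f i x \<in> V j" using P1[OF i j Pij] unfolding V_def by simp
  qed
  obtain k0 where k0: "k0 \<in> {1..N}" "c k0 < b k0"
  proof (rule ccontr)
    assume "\<not> thesis"
    then have eq: "\<And>j. j \<in> {1..N} \<Longrightarrow> c j = b j" using that c_le_b by (meson not_le order_antisym)
    have "\<exists>aa. (\<forall>i\<in>{1..N}. aa i \<in> {0..1}) \<and> (\<forall>i\<in>{1..N}. \<forall>j\<in>{1..N}. P i j > 0 \<longrightarrow> f i (aa i) = aa j)"
    proof (intro exI[of _ b] conjI ballI impI)
      fix i assume i: "i \<in> {1..N}"
      show "b i \<in> {0..1}" unfolding b_def by (rule S_I[OF i B_in[OF i]])
    next
      fix i j assume i: "i \<in> {1..N}" and j: "j \<in> {1..N}" and Pij: "P i j > 0"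
      have "f i (b i) \<in> S j" using supp_step[OF i j Pij B_in[OF i]] unfolding b_def .
      then have "f i (b i) \<le> b j" unfolding b_def by (rule B_ge[OF j])
      moreover have "b j \<le> f i (b i)" using P1[OF i j Pij] eq[OF i] eq[OF j] by simp
      ultimately show "f i (b i) = b j" by linarith
    qed
    then show False using g3 unfolding G3_def by blast
  qed
  have pos0: "m k0 (V k0) > 0"
  proof -
    have "m k0 (ball (b k0) (b k0 - c k0)) > 0" using B_in[OF k0(1)] supp_iff[OF k0(1)] k0(2)
      unfolding b_def by simp
    moreover have "ball (b k0) (b k0 - c k0) \<subseteq> V k0" unfolding V_def
      by (auto simp: dist_real_def)
    then have "m k0 (ball (b k0) (b k0 - c k0)) \<le> m k0 (V k0)" by (rule mmono[OF k0(1) _ Vb[OF k0(1)]])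
    ultimately show ?thesis by linarith
  qed
  have null: "m k' (- V k') = 0" by (rule key_main[of V, OF Vb inv k0(1) pos0 k'])
  have "- V k' = {..< c k'}" unfolding V_def by auto
  then have Vc: "- V k' \<in> sets borel" by simp
  have ca: "c k' \<le> a k'"
  proof (rule ccontr)
    assume "\<not> c k' \<le> a k'"
    then have r: "c k' - a k' > 0" by simp
    have "m k' (ball (a k') (c k' - a k')) > 0" using A_in[OF k'] supp_iff[OF k'] r
      unfolding a_def by simp
    moreover have "ball (a k') (c k' - a k') \<subseteq> - V k'" unfolding V_def
      by (auto simp: dist_real_def)
    then have "m k' (ball (a k') (c k' - a k')) \<le> m k' (- V k')" by (rule mmono[OF k' _ Vc])
    ultimately show False using null by linarith
  qed
  have "Inf (C k') < a k' + \<epsilon>" using ca eps c_def by simp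
  then obtain y where y: "y \<in> C k'" "y < a k' + \<epsilon>" using cInf_lessD[OF C_ne[OF k']] by blast
  obtain G where G: "adm_comp N P f k k' G" "y = G (b k)" using y(1) unfolding C_def by blast
  have Gp: "(\<forall>x\<in>{0..1}. \<forall>y\<in>{0..1}. x \<le> y \<longrightarrow> G x \<le> G y) \<and> (\<forall>x\<in>S k. G x \<in> S k')"
    using comp_props[OF G(1)] by blast
  have ak: "a k \<in> S k" unfolding a_def by (rule A_in[OF k])
  have akI: "a k \<in> {0..1}" by (rule S_I[OF k ak])
  have bkI: "b k \<in> {0..1}" by (rule S_I[OF k bk])
  have Gak: "a k' \<le> G (a k)" unfolding a_def by (rule A_le[OF k']) (use Gp ak a_def in blast)
  show ?thesis
  proof (intro exI[of _ G] conjI G(1) subsetI)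
    fix z assume "z \<in> G ` {A_mu \<mu> k..B_mu \<mu> k}"
    then obtain x where x: "x \<in> {a k..b k}" "z = G x" unfolding a_def b_def by blast
    have xI: "x \<in> {0..1}" using x(1) akI bkI by auto
    have "G x \<le> G (b k)" using Gp xI bkI x(1) by auto
    moreover have "G (a k) \<le> G x" using Gp xI akI x(1) by auto
    ultimately show "z \<in> ball (A_mu \<mu> k') \<epsilon>" using x(2) Gak y(2) G(2) eps
      unfolding a_def by (simp add: dist_real_def)
  qed
qed

end


context sys begin

lemma partB:
  assumes g3: "G3 N P f" and k: "k \<in> {1..N}" and k': "k' \<in> {1..N}" and eps: "\<epsilon> > 0"
  shows "\<exists>G. adm_comp N P f k k' G \<and> G ` {A_mu \<mu> k..B_mu \<mu> k} \<subseteq> ball (B_mu \<mu> k') \<epsilon>"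
proof -
  define a where "a = A_mu \<mu>"
  define b where "b = B_mu \<mu>"
  define C where "C j = {G (a k) | G. adm_comp N P f k j G}" for j
  define c where "c j = Sup (C j)" for j
  have ak: "a k \<in> S k" unfolding a_def by (rule A_in[OF k])
  have C_ne: "\<And>j. j \<in> {1..N} \<Longrightarrow> C j \<noteq> {}" unfolding C_def using comp_exists[OF k] by blast
  have C_S: "\<And>j y. y \<in> C j \<Longrightarrow> y \<in> S j"
    unfolding C_def using comp_props ak by blast
  have C_j: "\<And>j y. y \<in> C j \<Longrightarrow> j \<in> {1..N}"
    unfolding C_def using comp_props by blast
  have C_I: "\<And>j y. y \<in> C j \<Longrightarrow> y \<in> {0..1}" using C_S C_j S_I by blast
  have C_bdd: "\<And>j. bdd_above (C j)" unfolding bdd_above_def using C_I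
    by (metis atLeastAtMost_iff)
  have c_ge: "\<And>j y. y \<in> C j \<Longrightarrow> y \<le> c j" unfolding c_def by (rule cSup_upper[OF _ C_bdd])
  have c_le1: "\<And>j. j \<in> {1..N} \<Longrightarrow> c j \<le> 1" unfolding c_def
    by (rule cSup_least[OF C_ne]) (use C_I in auto)
  have c_I: "\<And>j. j \<in> {1..N} \<Longrightarrow> c j \<in> {0..1}"
  proof -
    fix j assume j: "j \<in> {1..N}"
    obtain y where y: "y \<in> C j" using C_ne[OF j] by blast
    show "c j \<in> {0..1}" using c_ge[OF y] C_I[OF y] c_le1[OF j] by auto
  qed
  have c_ge_a: "\<And>j. j \<in> {1..N} \<Longrightarrow> a j \<le> c j"
  proof -
    fix j assume j: "j \<in> {1..N}"
    obtain y where y: "y \<in> C j" using C_ne[OF j] by blast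
    have "a j \<le> y" unfolding a_def by (rule A_le[OF j C_S[OF y]])
    then show "a j \<le> c j" using c_ge[OF y] by linarith
  qed
  have P1: "\<And>i j. i \<in> {1..N} \<Longrightarrow> j \<in> {1..N} \<Longrightarrow> P i j > 0 \<Longrightarrow> f i (c i) \<le> c j"
  proof (rule ccontr)
    fix i j assume i: "i \<in> {1..N}" and j: "j \<in> {1..N}" and Pij: "P i j > 0" and n: "\<not> f i (c i) \<le> c j"
    define e where "e = f i (c i) - c j"
    have e: "e > 0" using n e_def by simp
    obtain d where d: "d > 0" "\<forall>y\<in>{0..1}. dist y (c i) < d \<longrightarrow> dist (f i y) (f i (c i)) < e"
      using f_cont[OF i] c_I[OF i] e unfolding continuous_on_iff by metis
    have "c i - d < Sup (C i)" using d(1) c_def by simp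
    then obtain y where y: "y \<in> C i" "c i - d < y" using less_cSupD[OF C_ne[OF i]] by blast
    have yc: "y \<le> c i" by (rule c_ge[OF y(1)])
    have "dist y (c i) < d" using y(2) yc by (simp add: dist_real_def)
    then have "dist (f i y) (f i (c i)) < e" using d(2) C_I[OF y(1)] by blast
    then have fy: "c j < f i y" unfolding e_def dist_real_def by linarith
    obtain G where G: "adm_comp N P f k i G" "y = G (a k)" using y(1) unfolding C_def by blast
    have ac: "adm_comp N P f k j (f i \<circ> G)" by (rule adm_comp_snoc[OF G(1) Pij j])
    have "f i y \<in> C j" unfolding C_def mem_Collect_eq
      by (rule exI[of _ "f i \<circ> G"]) (simp add: G(2) ac)
    then have "f i y \<le> c j" by (rule c_ge)
    then show False using fy by linarith
  qed
  define V where "V j = {..c j}" for j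
  have Vb: "\<And>j. j \<in> {1..N} \<Longrightarrow> V j \<in> sets borel" unfolding V_def by simp
  have inv: "\<And>i j x. i \<in> {1..N} \<Longrightarrow> j \<in> {1..N} \<Longrightarrow> P i j > 0 \<Longrightarrow> x \<in> {0..1} \<Longrightarrow> x \<in> V i \<Longrightarrow> f i x \<in> V j"
  proof -
    fix i j x assume i: "i \<in> {1..N}" and j: "j \<in> {1..N}" and Pij: "P i j > 0" and x: "x \<in> {0..1}" and xV: "x \<in> V i"
    have "f i x \<le> f i (c i)" using f_mono[OF i x c_I[OF i]] xV unfolding V_def by simp
    then show "f i x \<in> V j" using P1[OF i j Pij] unfolding V_def by simp
  qed
  obtain k0 where k0: "k0 \<in> {1..N}" "a k0 < c k0"
  proof (rule ccontr)
    assume "\<not> thesis"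
    then have eq: "\<And>j. j \<in> {1..N} \<Longrightarrow> c j = a j" using that c_ge_a by (meson not_le order_antisym)
    have "\<exists>aa. (\<forall>i\<in>{1..N}. aa i \<in> {0..1}) \<and> (\<forall>i\<in>{1..N}. \<forall>j\<in>{1..N}. P i j > 0 \<longrightarrow> f i (aa i) = aa j)"
    proof (intro exI[of _ a] conjI ballI impI)
      fix i assume i: "i \<in> {1..N}"
      show "a i \<in> {0..1}" unfolding a_def by (rule S_I[OF i A_in[OF i]])
    next
      fix i j assume i: "i \<in> {1..N}" and j: "j \<in> {1..N}" and Pij: "P i j > 0"
      have "f i (a i) \<in> S j" using supp_step[OF i j Pij A_in[OF i]] unfolding a_def .
      then have "a j \<le> f i (a i)" unfolding a_def by (rule A_le[OF j])
      moreover have "f i (a i) \<le> a j" using P1[OF i j Pij] eq[OF i] eq[OF j] by simp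
      ultimately show "f i (a i) = a j" by linarith
    qed
    then show False using g3 unfolding G3_def by blast
  qed
  have pos0: "m k0 (V k0) > 0"
  proof -
    have "m k0 (ball (a k0) (c k0 - a k0)) > 0" using A_in[OF k0(1)] supp_iff[OF k0(1)] k0(2)
      unfolding a_def by simp
    moreover have "ball (a k0) (c k0 - a k0) \<subseteq> V k0" unfolding V_def
      by (auto simp: dist_real_def)
    then have "m k0 (ball (a k0) (c k0 - a k0)) \<le> m k0 (V k0)" by (rule mmono[OF k0(1) _ Vb[OF k0(1)]])
    ultimately show ?thesis by linarith
  qed
  have null: "m k' (- V k') = 0" by (rule key_main[of V, OF Vb inv k0(1) pos0 k'])
  have "- V k' = {c k'<..}" unfolding V_def by auto
  then have Vc: "- V k' \<in> sets borel" by simp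
  have cb: "b k' \<le> c k'"
  proof (rule ccontr)
    assume "\<not> b k' \<le> c k'"
    then have r: "b k' - c k' > 0" by simp
    have "m k' (ball (b k') (b k' - c k')) > 0" using B_in[OF k'] supp_iff[OF k'] r
      unfolding b_def by simp
    moreover have "ball (b k') (b k' - c k') \<subseteq> - V k'" unfolding V_def
      by (auto simp: dist_real_def)
    then have "m k' (ball (b k') (b k' - c k')) \<le> m k' (- V k')" by (rule mmono[OF k' _ Vc])
    ultimately show False using null by linarith
  qed
  have "b k' - \<epsilon> < Sup (C k')" using cb eps c_def by simp
  then obtain y where y: "y \<in> C k'" "b k' - \<epsilon> < y" using less_cSupD[OF C_ne[OF k']] by blast
  obtain G where G: "adm_comp N P f k k' G" "y = G (a k)" using y(1) unfolding C_def by blast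
  have Gp: "(\<forall>x\<in>{0..1}. \<forall>y\<in>{0..1}. x \<le> y \<longrightarrow> G x \<le> G y) \<and> (\<forall>x\<in>S k. G x \<in> S k')"
    using comp_props[OF G(1)] by blast
  have bk: "b k \<in> S k" unfolding b_def by (rule B_in[OF k])
  have akI: "a k \<in> {0..1}" by (rule S_I[OF k ak])
  have bkI: "b k \<in> {0..1}" by (rule S_I[OF k bk])
  have Gbk: "G (b k) \<le> b k'" unfolding b_def by (rule B_ge[OF k']) (use Gp bk b_def in blast)
  show ?thesis
  proof (intro exI[of _ G] conjI G(1) subsetI)
    fix z assume "z \<in> G ` {A_mu \<mu> k..B_mu \<mu> k}"
    then obtain x where x: "x \<in> {a k..b k}" "z = G x" unfolding a_def b_def by blast
    have xI: "x \<in> {0..1}" using x(1) akI bkI by auto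
    have "G x \<le> G (b k)" using Gp xI bkI x(1) by auto
    moreover have "G (a k) \<le> G x" using Gp xI akI x(1) by auto
    ultimately show "z \<in> ball (B_mu \<mu> k') \<epsilon>" using x(2) Gbk y(2) G(2) eps
      unfolding b_def by (simp add: dist_real_def)
  qed
qed

end

theorem mainTheorem6:
  fixes N :: nat and A P :: "nat \<Rightarrow> nat \<Rightarrow> real" and f :: "nat \<Rightarrow> real \<Rightarrow> real"
    and \<mu> :: "nat \<Rightarrow> real measure" and k k' :: nat and \<epsilon> :: real
  assumes "N \<ge> 1"
    and "zero_one_matrix N A" and "primitive_matrix N A"
    and "stochastic_matrix N P"
    and "\<forall>i\<in>{1..N}. \<forall>j\<in>{1..N}. P i j > 0 \<longleftrightarrow> A i j = 1"
    and "\<forall>i\<in>{1..N}. good_map (f i)"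
    and "G1 N P f" and "G2 N P f" and "G3 N P f"
    and "ergodic N P f \<mu>"
    and "k \<in> {1..N}" and "k' \<in> {1..N}"
    and "\<epsilon> > 0"
  shows "\<exists>GA GB. adm_comp N P f k k' GA \<and> adm_comp N P f k k' GB \<and>
           GA ` {A_mu \<mu> k..B_mu \<mu> k} \<subseteq> ball (A_mu \<mu> k') \<epsilon> \<and>
           GB ` {A_mu \<mu> k..B_mu \<mu> k} \<subseteq> ball (B_mu \<mu> k') \<epsilon>"
proof -
  obtain n where n: "n \<ge> 1" "\<forall>i\<in>{1..N}. \<forall>j\<in>{1..N}. matpow N A n i j > 0"
    using assms(3) unfolding primitive_matrix_def by blast
  have conn: "\<forall>i\<in>{1..N}. \<forall>j\<in>{1..N}. \<exists>ws. adm_word N P ws i j"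
  proof (intro ballI)
    fix i j assume i: "i \<in> {1..N}" and j: "j \<in> {1..N}"
    obtain ws where ws: "length ws = Suc n" "set ws \<subseteq> {1..N}" "hd ws = i" "last ws = j"
      "\<forall>m. Suc m < length ws \<longrightarrow> A (ws ! m) (ws ! Suc m) = 1"
      using matpow_path[OF assms(2) i j] n(2) i j by blast
    have "adm_word N P ws i j" unfolding adm_word_def
    proof (intro conjI allI impI)
      show "2 \<le> length ws" using ws(1) n(1) by simp
      fix m assume m: "Suc m < length ws"
      have a: "ws ! m \<in> {1..N}" using ws(2) m by (meson Suc_lessD nth_mem subsetD)
      have b: "ws ! Suc m \<in> {1..N}" using ws(2) m by (meson nth_mem subsetD)
      show "P (ws ! m) (ws ! Suc m) > 0" using assms(5) a b ws(5) m by blast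
    qed (use ws in auto)
    then show "\<exists>ws. adm_word N P ws i j" by blast
  qed
  interpret s: sys N P f \<mu>
    by (rule sys.intro) (fact assms(4), fact assms(6), fact assms(10), fact conn)
  obtain GA where GA: "adm_comp N P f k k' GA" "GA ` {A_mu \<mu> k..B_mu \<mu> k} \<subseteq> ball (A_mu \<mu> k') \<epsilon>"
    using s.partA[OF assms(9,11,12,13)] by blast
  obtain GB where GB: "adm_comp N P f k k' GB" "GB ` {A_mu \<mu> k..B_mu \<mu> k} \<subseteq> ball (B_mu \<mu> k') \<epsilon>"
    using s.partB[OF assms(9,11,12,13)] by blast
  show ?thesis using GA GB by blast
qed

end
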